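(* For $|z_1|,|z_2|<1$, integers $i,j\ge0$ and $k_1,\ldots,k_{i+j}\ge1$ with $i+j\ge1$ (all 2MPLs below in the variables $(z_1,z_2)$): $$\frac{\partial}{\partial z_1}\mathrm{Li}_{k_1,\ldots,k_{i+j}}(i,j)=\begin{cases}\frac{z_2}{1-z_1z_2}\mathrm{Li}_{k_2,\ldots,k_j}(0,j-1)&(i=0,k_1=1),\\ \frac1{1-z_1}\mathrm{Li}_{k_2,\ldots,k_{i+j}}(i-1,j)&(i>0,k_1=1),\\ \frac1{z_1}\mathrm{Li}_{k_1-1,k_2,\ldots,k_{i+j}}(i,j)&(k_1>1),\end{cases}$$ and, if $j\ge1$, $$\frac{\partial}{\partial z_2}\mathrm{Li}_{k_1,\ldots,k_{i+j}}(i,j)=\begin{cases}\frac{z_1}{1-z_1z_2}\mathrm{Li}_{k_2,\ldots,k_j}(0,j-1)&(i=0,k_1=1),\\ \frac1{1-z_2}\mathrm{Li}_{\mathbf k'}(i,j-1)-\frac1{1-z_2}\mathrm{Li}_{\mathbf k'}(i-1,j)-\frac1{z_2}\mathrm{Li}_{\mathbf k'}(i-1,j)&(i>0,k_{i+1}=1),\\ \frac1{z_2}\mathrm{Li}_{k_1,\ldots,k_i,k_{i+1}-1,k_{i+2},\ldots,k_{i+j}}(i,j)&(k_{i+1}>1),\end{cases}$$ where $\mathbf k'=(k_1,\ldots,k_i,k_{i+2},\ldots,k_{i+j})$.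
   Context: For integers $i,j\ge0$, $k_1,\ldots,k_{i+j}\ge1$ and $|z_1|,|z_2|<1$, the multiple polylogarithm of two variables (2MPL) of main variable $z_1$ is $$\mathrm{Li}_{k_1,\ldots,k_{i+j}}(i,j;z_1,z_2)=\sum_{n_1>n_2>\cdots>n_{i+j}>0}\frac{z_1^{n_1}z_2^{n_{i+1}}}{n_1^{k_1}\cdots n_{i+j}^{k_{i+j}}},$$ with the factor $z_2^{n_{i+1}}$ omitted when $j=0$; the empty 2MPL $\mathrm{Li}_\emptyset(0,0;z_1,z_2)$ equals $1$. *)

theory Defs
  imports "HOL-Analysis.Analysis"
begin

definition dec_tuples :: "nat \<Rightarrow> nat list set" where
  "dec_tuples m = {ns. length ns = m \<and> sorted_wrt (>) ns \<and> (\<forall>n\<in>set ns. 0 < n)}"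

text \<open>The factor z2^{n_{i+1}}
  (0-based: ns ! i) is omitted when j = 0; the empty 2MPL equals 1.\<close>
definition Li2 :: "nat list \<Rightarrow> nat \<Rightarrow> nat \<Rightarrow> complex \<Rightarrow> complex \<Rightarrow> complex" where
  "Li2 ks i j z1 z2 =
     (if ks = [] then 1 else
      (\<Sum>\<^sub>\<infinity> ns \<in> dec_tuples (length ks).
         z1 ^ (ns ! 0) * (if j = 0 then 1 else z2 ^ (ns ! i))
         / (\<Prod>l<length ks. of_nat (ns ! l) ^ (ks ! l))))"

end

theory Submission
  imports Defs "HOL-Complex_Analysis.Complex_Analysis"
begin

lemma termwise_deriv:
  fixes f :: "'a \<Rightarrow> complex \<Rightarrow> complex" and M :: "'a \<Rightarrow> real"
  assumes r: "r > 0"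
    and der: "\<And>x w. x \<in> I \<Longrightarrow> (f x has_field_derivative f' x w) (at w)"
    and bnd: "\<And>x w. x \<in> I \<Longrightarrow> w \<in> cball z r \<Longrightarrow> norm (f x w) \<le> M x"
    and Msum: "M summable_on I"
    and f'sum: "(\<lambda>x. f' x z) summable_on I"
  shows "((\<lambda>w. \<Sum>\<^sub>\<infinity>x\<in>I. f x w) has_field_derivative (\<Sum>\<^sub>\<infinity>x\<in>I. f' x z)) (at z)"
proof -
  let ?F = "finite_subsets_at_top I"
  let ?g = "\<lambda>w. \<Sum>\<^sub>\<infinity>x\<in>I. f x w"
  have fsum: "(\<lambda>x. f x w) summable_on I" if "w \<in> cball z r" for w
  proof -
    have "(\<lambda>x. norm (f x w)) summable_on I"
      using Msum bnd[OF _ that] by (rule summable_on_comparison_test) auto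
    thus ?thesis by (rule abs_summable_summable)
  qed
  have ulim: "uniform_limit (cball z r) (\<lambda>X w. \<Sum>x\<in>X. f x w) ?g ?F"
  proof (rule uniform_limitI)
    fix e :: real assume e: "e > 0"
    have "(sum M \<longlongrightarrow> infsum M I) ?F"
      using Msum has_sum_def has_sum_infsum by blast
    hence ev1: "\<forall>\<^sub>F X in ?F. dist (sum M X) (infsum M I) < e"
      using e tendstoD by blast
    have ev2: "\<forall>\<^sub>F X in ?F. finite X \<and> X \<subseteq> I"
      by (simp add: eventually_finite_subsets_at_top_weakI)
    show "\<forall>\<^sub>F X in ?F. \<forall>w\<in>cball z r. dist (\<Sum>x\<in>X. f x w) (?g w) < e"
      using ev1 ev2
    proof eventually_elim
      case (elim X)
      hence fin: "finite X" and sub: "X \<subseteq> I" by auto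
      have MD: "(M has_sum (infsum M I - sum M X)) (I - X)"
      proof -
        have "M summable_on (I - X)" using Msum summable_on_subset_banach by blast
        have IX: "I = X \<union> (I - X)" using sub by blast
        have "infsum M (X \<union> (I - X)) = infsum M X + infsum M (I - X)"
          by (rule infsum_Un_disjoint) (use fin \<open>M summable_on (I - X)\<close> in auto)
        hence "infsum M I = infsum M X + infsum M (I - X)" using IX by simp
        thus ?thesis using \<open>M summable_on (I - X)\<close> fin by (simp add: has_sum_iff)
      qed
      show ?case
      proof
        fix w assume w: "w \<in> cball z r"
        have sD: "(\<lambda>x. f x w) summable_on (I - X)" using fsum[OF w] summable_on_subset_banach by blast
        have IX: "I = X \<union> (I - X)" using sub by blast
        have "(\<Sum>\<^sub>\<infinity>x\<in>X \<union> (I - X). f x w) = (\<Sum>\<^sub>\<infinity>x\<in>X. f x w) + (\<Sum>\<^sub>\<infinity>x\<in>I - X. f x w)"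
          by (rule infsum_Un_disjoint) (use fin sD in auto)
        hence eq: "?g w = (\<Sum>x\<in>X. f x w) + (\<Sum>\<^sub>\<infinity>x\<in>I - X. f x w)"
          using IX fin by simp
        have "norm (\<Sum>\<^sub>\<infinity>x\<in>I - X. f x w) \<le> infsum M I - sum M X"
          by (rule norm_infsum_le[OF _ MD]) (use sD bnd w in auto)
        also have "\<dots> < e" using elim by (simp add: dist_norm)
        finally show "dist (\<Sum>x\<in>X. f x w) (?g w) < e"
          by (simp add: eq dist_norm)
      qed
    qed
  qed
  have cont: "\<forall>\<^sub>F X in ?F. continuous_on (cball z r) (\<lambda>w. \<Sum>x\<in>X. f x w) \<and>
      (\<forall>w\<in>ball z r. ((\<lambda>w. \<Sum>x\<in>X. f x w) has_field_derivative (\<Sum>x\<in>X. f' x w)) (at w))"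
  proof (rule eventually_finite_subsets_at_top_weakI)
    fix X assume "finite X" "X \<subseteq> I"
    hence d: "((\<lambda>w. \<Sum>x\<in>X. f x w) has_field_derivative (\<Sum>x\<in>X. f' x w)) (at w)" for w
      using der by (intro DERIV_sum) auto
    show "continuous_on (cball z r) (\<lambda>w. \<Sum>x\<in>X. f x w) \<and>
      (\<forall>w\<in>ball z r. ((\<lambda>w. \<Sum>x\<in>X. f x w) has_field_derivative (\<Sum>x\<in>X. f' x w)) (at w))"
      using d by (meson DERIV_isCont continuous_at_imp_continuous_on)
  qed
  obtain g' where g': "\<And>w. w \<in> ball z r \<Longrightarrow> (?g has_field_derivative (g' w)) (at w) \<and>
      ((\<lambda>X. \<Sum>x\<in>X. f' x w) \<longlongrightarrow> g' w) ?F"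
    using has_complex_derivative_uniform_limit[OF cont ulim _ r] by auto
  have z: "z \<in> ball z r" using r by simp
  have "((\<lambda>X. \<Sum>x\<in>X. f' x z) \<longlongrightarrow> (\<Sum>\<^sub>\<infinity>x\<in>I. f' x z)) ?F"
    using f'sum has_sum_def has_sum_infsum by blast
  hence "g' z = (\<Sum>\<^sub>\<infinity>x\<in>I. f' x z)"
    using g'[OF z] tendsto_unique finite_subsets_at_top_neq_bot by blast
  thus ?thesis using g'[OF z] by simp
qed

definition ins_at :: "nat \<Rightarrow> nat \<Rightarrow> nat list \<Rightarrow> nat list" where
  "ins_at p n t = take p t @ n # drop p t"
definition del_at :: "nat \<Rightarrow> nat list \<Rightarrow> nat list" where
  "del_at p ns = take p ns @ drop (Suc p) ns"
definition Bset :: "nat \<Rightarrow> nat list \<Rightarrow> nat set" where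
  "Bset p t = {n. (p < length t \<longrightarrow> t!p < n) \<and> 0 < n \<and> (p = 0 \<or> n < t!(p-1))}"

lemma dec_sorted_nth: "sorted_wrt (>) (t::nat list) \<Longrightarrow> i < j \<Longrightarrow> j < length t \<Longrightarrow> t!j < t!i"
  by (simp add: sorted_wrt_iff_nth_less)

lemma dec_sorted_nth_le:
  assumes "sorted_wrt (>) (t::nat list)" "i \<le> j" "j < length t" shows "t!j \<le> t!i"
proof (cases "i = j")
  case True thus ?thesis by simp
next
  case False thus ?thesis using dec_sorted_nth[of t i j] assms by simp
qed

lemma ins_at_dec:
  assumes t: "t \<in> dec_tuples m" and p: "p \<le> m" and n: "n \<in> Bset p t"
  shows "ins_at p n t \<in> dec_tuples (Suc m)"
proof -
  have len: "length t = m" and s: "sorted_wrt (>) t" and pos: "\<forall>x\<in>set t. 0 < x"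
    using t by (auto simp: dec_tuples_def)
  have n0: "0 < n" using n by (simp add: Bset_def)
  have A: "x > n" if "x \<in> set (take p t)" for x
  proof -
    from that obtain k where k: "k < length (take p t)" "x = take p t ! k" by (auto simp: in_set_conv_nth)
    hence kp: "k < p" "k < m" using len by auto
    hence "p \<noteq> 0" by auto
    hence "n < t!(p-1)" using n by (simp add: Bset_def)
    moreover have "t!(p-1) \<le> t!k" using dec_sorted_nth_le[OF s, of k "p-1"] kp p len by auto
    ultimately show ?thesis using k kp by simp
  qed
  have B: "x < n" if "x \<in> set (drop p t)" for x
  proof -
    from that obtain k where k: "k < length (drop p t)" "x = drop p t ! k" by (auto simp: in_set_conv_nth)
    hence kp: "p + k < m" "x = t!(p+k)" using len by auto
    hence "t!p < n" using n len by (simp add: Bset_def)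
    moreover have "t!(p+k) \<le> t!p" using dec_sorted_nth_le[OF s, of p "p+k"] kp len by auto
    ultimately show ?thesis using kp by simp
  qed
  have C: "x > y" if "x \<in> set (take p t)" "y \<in> set (drop p t)" for x y
    using A B that by (meson less_trans)
  have "sorted_wrt (>) (take p t @ n # drop p t)"
    using s A B C by (auto simp: sorted_wrt_append sorted_wrt_take sorted_wrt_drop)
  moreover have "\<forall>x\<in>set (take p t @ n # drop p t). 0 < x"
    using pos n0 by (auto dest: in_set_takeD in_set_dropD)
  ultimately show ?thesis using len p by (simp add: dec_tuples_def ins_at_def)
qed

lemma del_at_dec:
  assumes ns: "ns \<in> dec_tuples (Suc m)" and p: "p \<le> m"
  shows "del_at p ns \<in> dec_tuples m" "ns ! p \<in> Bset p (del_at p ns)"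
proof -
  have len: "length ns = Suc m" and s: "sorted_wrt (>) ns" and pos: "\<forall>x\<in>set ns. 0 < x"
    using ns by (auto simp: dec_tuples_def)
  have "\<forall>x\<in>set (take p ns). \<forall>y\<in>set (drop p ns). x > y"
    using s by (metis append_take_drop_id sorted_wrt_append)
  moreover have "set (drop (Suc p) ns) \<subseteq> set (drop p ns)"
    by (simp add: set_drop_subset_set_drop)
  ultimately have "sorted_wrt (>) (del_at p ns)"
    using s by (auto simp: del_at_def sorted_wrt_append sorted_wrt_take sorted_wrt_drop)
  moreover have "\<forall>x\<in>set (del_at p ns). 0 < x"
    using pos by (auto simp: del_at_def dest: in_set_takeD in_set_dropD)
  ultimately show "del_at p ns \<in> dec_tuples m" using len p by (simp add: dec_tuples_def del_at_def)
  have l2: "length (del_at p ns) = m" using len p by (simp add: del_at_def)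
  have a: "del_at p ns ! p < ns ! p" if "p < m"
    using that len p dec_sorted_nth[OF s, of p "Suc p"] by (simp add: del_at_def nth_append)
  have b: "ns ! p < del_at p ns ! (p-1)" if "p \<noteq> 0"
    using that len p dec_sorted_nth[OF s, of "p-1" p] by (simp add: del_at_def nth_append)
  have c: "0 < ns ! p" using pos len p by simp
  show "ns ! p \<in> Bset p (del_at p ns)" using a b c l2 by (auto simp: Bset_def)
qed

lemma ins_bij:
  assumes p: "p \<le> m"
  shows "bij_betw (\<lambda>(t,n). ins_at p n t) (Sigma (dec_tuples m) (Bset p)) (dec_tuples (Suc m))"
proof (rule bij_betw_byWitness[where f' = "\<lambda>ns. (del_at p ns, ns ! p)"])
  show "\<forall>a\<in>Sigma (dec_tuples m) (Bset p). (\<lambda>ns. (del_at p ns, ns ! p)) ((\<lambda>(t,n). ins_at p n t) a) = a"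
  proof
    fix a assume "a \<in> Sigma (dec_tuples m) (Bset p)"
    then obtain t n where "a = (t,n)" "length t = m" by (auto simp: dec_tuples_def)
    thus "(\<lambda>ns. (del_at p ns, ns ! p)) ((\<lambda>(t,n). ins_at p n t) a) = a"
      using p by (simp add: ins_at_def del_at_def nth_append)
  qed
  show "\<forall>a'\<in>dec_tuples (Suc m). (\<lambda>(t,n). ins_at p n t) ((\<lambda>ns. (del_at p ns, ns ! p)) a') = a'"
  proof
    fix ns assume "ns \<in> dec_tuples (Suc m)"
    hence "length ns = Suc m" by (simp add: dec_tuples_def)
    thus "(\<lambda>(t,n). ins_at p n t) ((\<lambda>ns. (del_at p ns, ns ! p)) ns) = ns"
      using p by (simp add: ins_at_def del_at_def id_take_nth_drop[symmetric])
  qed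
  show "(\<lambda>(t,n). ins_at p n t) ` Sigma (dec_tuples m) (Bset p) \<subseteq> dec_tuples (Suc m)"
    using ins_at_dec[OF _ p] by auto
  show "(\<lambda>ns. (del_at p ns, ns ! p)) ` dec_tuples (Suc m) \<subseteq> Sigma (dec_tuples m) (Bset p)"
    using del_at_dec[OF _ p] by auto
qed

lemma regroup:
  fixes f :: "nat list \<Rightarrow> complex"
  assumes p: "p \<le> m" and fs: "f summable_on dec_tuples (Suc m)"
  shows "infsum f (dec_tuples (Suc m)) =
         (\<Sum>\<^sub>\<infinity>t\<in>dec_tuples m. \<Sum>\<^sub>\<infinity>n\<in>Bset p t. f (ins_at p n t))"
proof -
  have bij: "bij_betw (\<lambda>(t,n). ins_at p n t) (Sigma (dec_tuples m) (Bset p)) (dec_tuples (Suc m))"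
    by (rule ins_bij[OF p])
  have "infsum f (dec_tuples (Suc m)) = infsum (\<lambda>x. f ((\<lambda>(t,n). ins_at p n t) x)) (Sigma (dec_tuples m) (Bset p))"
    using infsum_reindex_bij_betw[OF bij, of f] by simp
  also have "\<dots> = (\<Sum>\<^sub>\<infinity>t\<in>dec_tuples m. \<Sum>\<^sub>\<infinity>n\<in>Bset p t. f (ins_at p n t))"
  proof (rule infsum_Sigma_banach[symmetric, where f = "\<lambda>x. f ((\<lambda>(t,n). ins_at p n t) x)", simplified])
    show "(\<lambda>x. f (case x of (t, n) \<Rightarrow> ins_at p n t)) summable_on Sigma (dec_tuples m) (Bset p)"
      using summable_on_reindex_bij_betw[OF bij] fs by blast
  qed
  finally show ?thesis .
qed

definition Pr :: "nat list \<Rightarrow> nat list \<Rightarrow> complex" where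
  "Pr ks ns = (\<Prod>l<length ks. of_nat (ns ! l) ^ (ks ! l))"

lemma Pr_Nil[simp]: "Pr [] ns = 1" by (simp add: Pr_def)

lemma Pr_Cons: "Pr (k#ks) (n#ns) = of_nat n ^ k * Pr ks ns"
  by (simp add: Pr_def prod.lessThan_Suc_shift del: prod.lessThan_Suc)

lemma Pr_list: "length ns = length ks \<Longrightarrow> Pr ks ns = prod_list (map2 (\<lambda>n k. (of_nat n::complex) ^ k) ns ks)"
proof (induction ns arbitrary: ks)
  case Nil thus ?case by simp
next
  case (Cons n ns) thus ?case by (cases ks) (auto simp: Pr_Cons)
qed

lemma Pr_split:
  assumes "length ns = length ks" "q < length ks"
  shows "Pr ks ns = of_nat (ns!q) ^ (ks!q) * Pr (del_at q ks) (del_at q ns)"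
proof -
  let ?h = "\<lambda>n k. (of_nat n::complex) ^ k"
  have e1: "ns = take q ns @ ns!q # drop (Suc q) ns" using assms by (simp add: id_take_nth_drop)
  have e2: "ks = take q ks @ ks!q # drop (Suc q) ks" using assms by (simp add: id_take_nth_drop)
  have l: "length (take q ns) = length (take q ks)" using assms by simp
  have "Pr ks ns = prod_list (map2 ?h (take q ns @ ns!q # drop (Suc q) ns) (take q ks @ ks!q # drop (Suc q) ks))"
    using Pr_list[OF assms(1)] e1 e2 by simp
  also have "\<dots> = prod_list (map2 ?h (take q ns) (take q ks)) * ?h (ns!q) (ks!q) * prod_list (map2 ?h (drop (Suc q) ns) (drop (Suc q) ks))"
    using l by (simp add: zip_append)
  also have "Pr (del_at q ks) (del_at q ns) = prod_list (map2 ?h (take q ns) (take q ks)) * prod_list (map2 ?h (drop (Suc q) ns) (drop (Suc q) ks))"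
    using assms l by (subst Pr_list) (auto simp: del_at_def zip_append)
  ultimately show ?thesis by (simp add: algebra_simps)
qed

lemma Pr_norm:
  assumes "\<forall>n\<in>set ns. 0 < n" "length ns = length ks"
  shows "1 \<le> norm (Pr ks ns)"
proof -
  have "norm (Pr ks ns) = (\<Prod>l<length ks. real (ns ! l) ^ (ks ! l))"
    by (simp add: Pr_def prod_norm[symmetric] norm_power)
  also have "1 \<le> \<dots>"
  proof (rule prod_ge_1)
    fix l assume "l \<in> {..<length ks}"
    hence "1 \<le> ns ! l" using assms by (auto simp: Suc_le_eq)
    thus "1 \<le> real (ns ! l) ^ (ks ! l)" by (simp add: one_le_power)
  qed
  finally show ?thesis .
qed

lemma Pr_nz: "\<forall>n\<in>set ns. 0 < n \<Longrightarrow> length ns = length ks \<Longrightarrow> Pr ks ns \<noteq> 0"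
  using Pr_norm by fastforce

lemma geom_UNIV:
  fixes q :: complex assumes "norm q < 1"
  shows "((\<lambda>n. q ^ n) has_sum (1 / (1 - q))) UNIV"
proof -
  have "((\<lambda>n. q ^ n) has_sum (q ^ 0 + q / (1 - q))) (insert 0 {1..})"
    by (rule has_sum_insert) (use has_sum_geometric_from_1[OF assms] in auto)
  moreover have "insert 0 {1..} = (UNIV::nat set)" by auto
  moreover have "q \<noteq> 1" using assms by auto
  hence "q ^ 0 + q / (1 - q) = 1 / (1 - q)"
    by (auto simp: field_simps)
  ultimately show ?thesis by simp
qed

lemma geom_ge:
  fixes q :: complex assumes "norm q < 1"
  shows "((\<lambda>n. q ^ n) has_sum (q ^ a / (1 - q))) {a..}"
proof -
  have "{a..} = (\<lambda>n. n + a) ` UNIV"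
  proof -
    { fix x assume "a \<le> x" hence "x = (x - a) + a" by simp hence "x \<in> range (\<lambda>n. n+a)" by blast }
    thus ?thesis by auto
  qed
  moreover have "inj (\<lambda>n::nat. n + a)" by (auto simp: inj_def)
  moreover have "(((\<lambda>n. q ^ n) \<circ> (\<lambda>n. n + a)) has_sum (q ^ a / (1 - q))) UNIV"
  proof -
    have "((\<lambda>n. q ^ a * q ^ n) has_sum (q ^ a * (1 / (1 - q)))) UNIV"
      by (rule has_sum_cmult_right[OF geom_UNIV[OF assms]])
    thus ?thesis by (simp add: o_def power_add mult.commute)
  qed
  ultimately show ?thesis by (simp only: has_sum_reindex)
qed

lemma geom_gt:
  fixes q :: complex assumes "norm q < 1"
  shows "((\<lambda>n. q ^ (n - 1)) has_sum (q ^ a / (1 - q))) {a<..}"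
proof -
  have "{a<..} = Suc ` {a..}"
  proof -
    { fix x assume "a < x" hence "x = Suc (x - 1)" "a \<le> x - 1" by auto hence "x \<in> Suc ` {a..}" by blast }
    thus ?thesis by auto
  qed
  moreover have "inj_on Suc {a..}" by simp
  moreover have "(((\<lambda>n. q ^ (n - 1)) \<circ> Suc) has_sum (q ^ a / (1 - q))) {a..}"
    using geom_ge[OF assms] by (simp add: o_def)
  ultimately show ?thesis by (simp only: has_sum_reindex)
qed

lemma geom_fin:
  fixes w :: complex assumes "w \<noteq> 1" "a < b"
  shows "(\<Sum>n\<in>{a<..<b}. w ^ (n - 1)) = (w ^ a - w ^ (b - 1)) / (1 - w)"
proof -
  obtain d where b: "b = Suc a + d" using assms(2) less_iff_Suc_add by auto
  have nz: "1 - w \<noteq> 0" using assms(1) by simp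
  have "(\<Sum>n\<in>{a<..<Suc a + d}. w ^ (n - 1)) = (w ^ a - w ^ (a + d)) / (1 - w)"
  proof (induction d)
    case 0 thus ?case by simp
  next
    case (Suc d)
    have "{a<..<Suc a + Suc d} = insert (Suc a + d) {a<..<Suc a + d}" by auto
    hence "(\<Sum>n\<in>{a<..<Suc a + Suc d}. w ^ (n - 1)) = w ^ (a + d) + (w ^ a - w ^ (a + d)) / (1 - w)"
      using Suc by simp
    also have "\<dots> = (w ^ (a + d) * (1 - w) + (w ^ a - w ^ (a + d))) / (1 - w)"
      using nz by (simp add: add_divide_distrib)
    also have "w ^ (a + d) * (1 - w) + (w ^ a - w ^ (a + d)) = w ^ a - w ^ (a + Suc d)"
      by (simp add: algebra_simps)
    finally show ?case by simp
  qed
  thus ?thesis using b by simp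
qed

definition hd0 :: "nat list \<Rightarrow> nat" where "hd0 t = (if t = [] then 0 else t ! 0)"

lemma Bset0: "Bset 0 t = {hd0 t<..}"
  by (auto simp: Bset_def hd0_def)

lemma ins_at0: "ins_at 0 n t = n # t" by (simp add: ins_at_def)
lemma del_at0: "del_at 0 t = tl t" by (simp add: del_at_def drop_Suc)

lemma dec_summable:
  fixes r :: real assumes r: "0 \<le> r" "r < 1"
  shows "(\<lambda>ns. r ^ hd0 ns) summable_on dec_tuples m"
proof (induction m)
  case 0
  have "dec_tuples 0 = {[]}" by (auto simp: dec_tuples_def)
  thus ?case by simp
next
  case (Suc m)
  have bij: "bij_betw (\<lambda>(t,n). ins_at 0 n t) (Sigma (dec_tuples m) (Bset 0)) (dec_tuples (Suc m))"
    by (rule ins_bij) simp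
  have "(\<lambda>x. r ^ hd0 ((\<lambda>(t,n). ins_at 0 n t) x)) summable_on Sigma (dec_tuples m) (Bset 0)"
  proof (rule summable_on_SigmaI[where g = "\<lambda>t. r ^ hd0 t * (r / (1 - r))"])
    fix t assume "t \<in> dec_tuples m"
    have "((\<lambda>n. complex_of_real r ^ (n - 1)) has_sum (of_real r ^ hd0 t / (1 - of_real r))) {hd0 t<..}"
      by (rule geom_gt) (use r in auto)
    hence "((\<lambda>n. complex_of_real r * complex_of_real r ^ (n - 1)) has_sum (complex_of_real r * (complex_of_real r ^ hd0 t / (1 - complex_of_real r)))) {hd0 t<..}"
      by (rule has_sum_cmult_right)
    hence "((\<lambda>n. complex_of_real (r * r ^ (n - 1))) has_sum of_real (r * (r ^ hd0 t / (1 - r)))) {hd0 t<..}"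
      by simp
    hence h: "((\<lambda>n. r * r ^ (n - 1)) has_sum (r * (r ^ hd0 t / (1 - r)))) {hd0 t<..}"
      using has_sum_of_real_iff by blast
    have eq: "\<And>n. n \<in> {hd0 t<..} \<Longrightarrow> r * r^(n-1) = r^n" by (auto simp: power_eq_if)
    have h2: "((\<lambda>n. r ^ n) has_sum (r * (r ^ hd0 t / (1 - r)))) {hd0 t<..}"
      using has_sum_cong[of "{hd0 t<..}" "\<lambda>n. r * r^(n-1)" "\<lambda>n. r^n"] eq h by blast
    have eqv: "r * (r ^ hd0 t / (1 - r)) = r ^ hd0 t * (r / (1 - r))" by simp
    from h2[unfolded eqv] have "((\<lambda>n. r ^ n) has_sum (r ^ hd0 t * (r / (1 - r)))) {hd0 t<..}" .
    thus "((\<lambda>y. r ^ hd0 ((\<lambda>(t,n). ins_at 0 n t) (t, y))) has_sum (r ^ hd0 t * (r / (1 - r)))) (Bset 0 t)"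
      by (simp add: Bset0 ins_at0 hd0_def)
  next
    show "(\<lambda>t. r ^ hd0 t * (r / (1 - r))) summable_on dec_tuples m"
      using Suc summable_on_cmult_left by blast
  next
    fix t n show "0 \<le> r ^ hd0 ((\<lambda>(t,n). ins_at 0 n t) (t, n))" using r by simp
  qed
  thus ?case using summable_on_reindex_bij_betw[OF bij] by blast
qed

definition tm :: "nat list \<Rightarrow> nat \<Rightarrow> nat \<Rightarrow> complex \<Rightarrow> complex \<Rightarrow> nat list \<Rightarrow> complex" where
  "tm ks i j z1 z2 ns = z1 ^ (ns ! 0) * (if j = 0 then 1 else z2 ^ (ns ! i)) / Pr ks ns"

definition d1 :: "nat list \<Rightarrow> nat \<Rightarrow> nat \<Rightarrow> complex \<Rightarrow> complex \<Rightarrow> nat list \<Rightarrow> complex" where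
  "d1 ks i j z1 z2 ns = of_nat (ns ! 0) * z1 ^ (ns ! 0 - 1) * (if j = 0 then 1 else z2 ^ (ns ! i)) / Pr ks ns"

definition d2 :: "nat list \<Rightarrow> nat \<Rightarrow> complex \<Rightarrow> complex \<Rightarrow> nat list \<Rightarrow> complex" where
  "d2 ks i z1 z2 ns = z1 ^ (ns ! 0) * (of_nat (ns ! i) * z2 ^ (ns ! i - 1)) / Pr ks ns"

lemma Li2_tm: "ks \<noteq> [] \<Longrightarrow> Li2 ks i j z1 z2 = infsum (tm ks i j z1 z2) (dec_tuples (length ks))"
  unfolding Li2_def tm_def[abs_def] Pr_def by simp

lemma dec_D: "ns \<in> dec_tuples m \<Longrightarrow> length ns = m \<and> sorted_wrt (>) ns \<and> (\<forall>n\<in>set ns. 0 < n)"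
  by (simp add: dec_tuples_def)

lemma dec_nth_pos: "ns \<in> dec_tuples m \<Longrightarrow> l < m \<Longrightarrow> 0 < ns ! l"
  by (simp add: dec_tuples_def)

lemma summ_bound:
  fixes f :: "'a \<Rightarrow> complex" and B :: "'a \<Rightarrow> real"
  assumes "B summable_on A" "\<And>x. x \<in> A \<Longrightarrow> norm (f x) \<le> B x"
  shows "f summable_on A"
proof -
  have "(\<lambda>x. norm (f x)) summable_on A"
    by (rule summable_on_comparison_test[OF assms(1)]) (use assms(2) in auto)
  thus ?thesis by (rule abs_summable_summable)
qed

lemma summ_r0:
  fixes r :: real assumes "0 \<le> r" "r < 1"
  shows "(\<lambda>ns. r ^ (ns ! 0)) summable_on dec_tuples m"
proof (cases m)
  case 0
  hence "dec_tuples m = {[]}" by (auto simp: dec_tuples_def)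
  thus ?thesis by simp
next
  case (Suc m')
  have "(\<lambda>ns. r ^ hd0 ns) summable_on dec_tuples m" by (rule dec_summable[OF assms])
  moreover have eq: "\<And>ns. ns \<in> dec_tuples m \<Longrightarrow> r ^ hd0 ns = r ^ (ns ! 0)"
    using Suc by (auto simp: hd0_def dec_tuples_def)
  ultimately show ?thesis
    using summable_on_cong[where f="\<lambda>ns. r ^ hd0 ns" and g="\<lambda>ns. r ^ (ns!0)" and A="dec_tuples m"] eq by blast
qed

lemma summ_r1:
  fixes s :: real assumes s: "0 \<le> s" "s < 1"
  shows "(\<lambda>ns. s ^ (ns ! 0 - 1)) summable_on dec_tuples m"
proof (cases m)
  case 0
  hence "dec_tuples m = {[]}" by (auto simp: dec_tuples_def)
  thus ?thesis by simp
next
  case (Suc m')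
  define c where "c = (1 + s) / 2"
  have c: "0 < c" "c < 1" "s \<le> c" using s by (auto simp: c_def)
  have "(\<lambda>ns. c ^ (ns ! 0) * (1 / c)) summable_on dec_tuples m"
    by (rule summable_on_cmult_left[OF summ_r0]) (use c in auto)
  moreover have "s ^ (ns ! 0 - 1) \<le> c ^ (ns ! 0) * (1 / c)" if "ns \<in> dec_tuples m" for ns
  proof -
    have "0 < ns ! 0" using that Suc dec_nth_pos by auto
    hence "c ^ (ns ! 0) = c * c ^ (ns ! 0 - 1)" by (cases "ns ! 0") auto
    hence "c ^ (ns ! 0) * (1 / c) = c ^ (ns ! 0 - 1)" using c by simp
    moreover have "s ^ (ns ! 0 - 1) \<le> c ^ (ns ! 0 - 1)" using c s by (simp add: power_mono)
    ultimately show ?thesis by simp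
  qed
  ultimately show ?thesis
    by (rule summable_on_comparison_test) (use s in auto)
qed

lemma tm_bound:
  assumes ns: "ns \<in> dec_tuples (length ks)" and z2: "norm z2 \<le> 1"
  shows "norm (tm ks i j z1 z2 ns) \<le> norm z1 ^ (ns ! 0)"
proof -
  have P: "1 \<le> norm (Pr ks ns)" using ns by (intro Pr_norm) (auto simp: dec_tuples_def)
  have X: "norm (if j = 0 then 1 else z2 ^ (ns ! i)) \<le> 1"
    using z2 by (auto simp: norm_power power_le_one)
  have "norm (tm ks i j z1 z2 ns) = norm z1 ^ (ns ! 0) * norm (if j = 0 then 1 else z2 ^ (ns ! i)) / norm (Pr ks ns)"
    by (simp add: tm_def norm_divide norm_mult norm_power)
  also have "\<dots> \<le> norm z1 ^ (ns ! 0) * 1 / 1"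
    by (intro frac_le mult_left_mono X P) auto
  finally show ?thesis by simp
qed

lemma tm_summable:
  assumes "norm z1 < 1" "norm z2 \<le> 1"
  shows "tm ks i j z1 z2 summable_on dec_tuples (length ks)"
  by (rule summ_bound[OF summ_r0[of "norm z1"]]) (use assms tm_bound in auto)

lemma tm_deriv1: "Pr ks ns \<noteq> 0 \<Longrightarrow> ((\<lambda>w. tm ks i j w z2 ns) has_field_derivative d1 ks i j z z2 ns) (at z)"
  unfolding tm_def d1_def
  by (auto intro!: derivative_eq_intros)

lemma tm_deriv2: "Pr ks ns \<noteq> 0 \<Longrightarrow> j \<noteq> 0 \<Longrightarrow> ((\<lambda>w. tm ks i j z1 w ns) has_field_derivative d2 ks i z1 z ns) (at z)"
  unfolding tm_def d2_def
  by (auto intro!: derivative_eq_intros)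

lemma deriv_z1:
  assumes z1: "norm z1 < 1" and z2: "norm z2 \<le> 1" and ks: "ks \<noteq> []"
    and ds: "d1 ks i j z1 z2 summable_on dec_tuples (length ks)"
  shows "((\<lambda>w. Li2 ks i j w z2) has_field_derivative infsum (d1 ks i j z1 z2) (dec_tuples (length ks))) (at z1)"
proof -
  define r where "r = (1 - norm z1) / 2"
  define \<rho> where "\<rho> = (1 + norm z1) / 2"
  have r: "0 < r" and \<rho>: "0 \<le> \<rho>" "\<rho> < 1" using z1 by (auto simp: r_def \<rho>_def)
  have "((\<lambda>w. \<Sum>\<^sub>\<infinity>ns\<in>dec_tuples (length ks). tm ks i j w z2 ns) has_field_derivative
          (\<Sum>\<^sub>\<infinity>ns\<in>dec_tuples (length ks). d1 ks i j z1 z2 ns)) (at z1)"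
  proof (rule termwise_deriv[OF r])
    show "\<And>x w. x \<in> dec_tuples (length ks) \<Longrightarrow> ((\<lambda>w. tm ks i j w z2 x) has_field_derivative d1 ks i j w z2 x) (at w)"
      by (rule tm_deriv1, rule Pr_nz) (auto simp: dec_tuples_def)
    show "(\<lambda>ns. \<rho> ^ (ns ! 0)) summable_on dec_tuples (length ks)" by (rule summ_r0[OF \<rho>])
    show "norm (tm ks i j w z2 x) \<le> \<rho> ^ (x ! 0)" if "x \<in> dec_tuples (length ks)" "w \<in> cball z1 r" for x w
    proof -
      have "norm w \<le> norm z1 + r" using that(2) norm_triangle_sub[of w z1]
        by (auto simp: dist_norm norm_minus_commute)
      hence "norm w \<le> \<rho>" using r_def \<rho>_def by argo
      hence "norm w ^ (x ! 0) \<le> \<rho> ^ (x ! 0)" by (simp add: power_mono)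
      thus ?thesis using tm_bound[OF that(1) z2, of i j w] by simp
    qed
    show "(\<lambda>x. d1 ks i j z1 z2 x) summable_on dec_tuples (length ks)" using ds by simp
  qed
  moreover have "(\<lambda>w. Li2 ks i j w z2) = (\<lambda>w. \<Sum>\<^sub>\<infinity>ns\<in>dec_tuples (length ks). tm ks i j w z2 ns)"
    using ks by (simp add: Li2_tm)
  ultimately show ?thesis by simp
qed

lemma deriv_z2:
  assumes z1: "norm z1 < 1" and z2: "norm z2 < 1" and ks: "ks \<noteq> []" and j: "j \<noteq> 0"
    and ds: "d2 ks i z1 z2 summable_on dec_tuples (length ks)"
  shows "((\<lambda>w. Li2 ks i j z1 w) has_field_derivative infsum (d2 ks i z1 z2) (dec_tuples (length ks))) (at z2)"
proof -
  define r where "r = (1 - norm z2) / 2"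
  have r: "0 < r" using z2 by (auto simp: r_def)
  have "((\<lambda>w. \<Sum>\<^sub>\<infinity>ns\<in>dec_tuples (length ks). tm ks i j z1 w ns) has_field_derivative
          (\<Sum>\<^sub>\<infinity>ns\<in>dec_tuples (length ks). d2 ks i z1 z2 ns)) (at z2)"
  proof (rule termwise_deriv[OF r])
    show "\<And>x w. x \<in> dec_tuples (length ks) \<Longrightarrow> ((\<lambda>w. tm ks i j z1 w x) has_field_derivative d2 ks i z1 w x) (at w)"
      by (rule tm_deriv2[OF _ j], rule Pr_nz) (auto simp: dec_tuples_def)
    show "(\<lambda>ns. norm z1 ^ (ns ! 0)) summable_on dec_tuples (length ks)" by (rule summ_r0) (use z1 in auto)
    show "norm (tm ks i j z1 w x) \<le> norm z1 ^ (x ! 0)" if "x \<in> dec_tuples (length ks)" "w \<in> cball z2 r" for x w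
    proof -
      have "norm w \<le> norm z2 + r" using that(2) norm_triangle_sub[of w z2]
        by (auto simp: dist_norm norm_minus_commute)
      hence "norm w \<le> 1" using z2 r_def by argo
      thus ?thesis using tm_bound[OF that(1)] by simp
    qed
    show "(\<lambda>x. d2 ks i z1 z2 x) summable_on dec_tuples (length ks)" using ds by simp
  qed
  moreover have "(\<lambda>w. Li2 ks i j z1 w) = (\<lambda>w. \<Sum>\<^sub>\<infinity>ns\<in>dec_tuples (length ks). tm ks i j z1 w ns)"
    using ks by (simp add: Li2_tm)
  ultimately show ?thesis by simp
qed

lemma Pr_upd:
  assumes "length ns = length ks" "q < length ks"
  shows "Pr (ks[q := k']) ns = of_nat (ns!q) ^ k' * Pr (del_at q ks) (del_at q ns)"
proof -
  have "Pr (ks[q := k']) ns = of_nat (ns!q) ^ (ks[q := k'] ! q) * Pr (del_at q (ks[q := k'])) (del_at q ns)"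
    by (rule Pr_split) (use assms in auto)
  moreover have "del_at q (ks[q := k']) = del_at q ks"
    by (simp add: del_at_def)
  ultimately show ?thesis using assms by simp
qed

lemma alg1:
  fixes z X R :: complex
  assumes "1 \<le> n" "1 \<le> k" "z \<noteq> 0" "R \<noteq> 0"
  shows "of_nat n * z ^ (n - 1) * X / (of_nat n ^ k * R) = 1 / z * (z ^ n * X / (of_nat n ^ (k - 1) * R))"
proof -
  obtain a where a: "n = Suc a" using assms(1) by (cases n) auto
  obtain b where b: "k = Suc b" using assms(2) by (cases k) auto
  have "of_nat (Suc a) \<noteq> (0::complex)" by (simp del: of_nat_Suc)
  thus ?thesis using assms(3,4) unfolding a b by (simp add: field_simps del: of_nat_Suc)
qed

lemma case3:
  assumes z1: "norm z1 < 1" "z1 \<noteq> 0" and z2: "norm z2 \<le> 1" and ks: "ks \<noteq> []" and k: "ks ! 0 > 1"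
  shows "((\<lambda>w. Li2 ks i j w z2) has_field_derivative (1 / z1 * Li2 (ks[0 := ks ! 0 - 1]) i j z1 z2)) (at z1)"
proof -
  define D where "D = dec_tuples (length ks)"
  define ks' where "ks' = ks[0 := ks ! 0 - 1]"
  have l': "length ks' = length ks" by (simp add: ks'_def)
  have eq: "d1 ks i j z1 z2 ns = 1 / z1 * tm ks' i j z1 z2 ns" if ns: "ns \<in> D" for ns
  proof -
    have len: "length ns = length ks" and pos: "\<forall>n\<in>set ns. 0 < n" using ns by (auto simp: D_def dec_tuples_def)
    have q: "0 < length ks" using ks by simp
    have n1: "1 \<le> ns ! 0" using pos len q by (simp add: Suc_le_eq)
    have P1: "Pr ks ns = of_nat (ns!0) ^ (ks!0) * Pr (del_at 0 ks) (del_at 0 ns)" by (rule Pr_split[OF len q])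
    have P2: "Pr ks' ns = of_nat (ns!0) ^ (ks!0 - 1) * Pr (del_at 0 ks) (del_at 0 ns)"
      unfolding ks'_def by (rule Pr_upd[OF len q])
    have R: "Pr (del_at 0 ks) (del_at 0 ns) \<noteq> 0" using Pr_nz[OF pos len] P1 by auto
    show ?thesis unfolding d1_def tm_def P1 P2
      by (rule alg1[OF n1 _ z1(2) R]) (use k in auto)
  qed
  have ts: "tm ks' i j z1 z2 summable_on D" using tm_summable[OF z1(1) z2, of ks' i j] l' by (simp add: D_def)
  have ds: "d1 ks i j z1 z2 summable_on D"
    using summable_on_cmult_right[OF ts, of "1/z1"] summable_on_cong[where f="d1 ks i j z1 z2" and g="\<lambda>ns. 1 / z1 * tm ks' i j z1 z2 ns" and A=D] eq by blast
  have "infsum (d1 ks i j z1 z2) D = infsum (\<lambda>ns. 1 / z1 * tm ks' i j z1 z2 ns) D"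
    by (rule infsum_cong[OF eq])
  also have "\<dots> = 1 / z1 * infsum (tm ks' i j z1 z2) D"
    by (rule infsum_cmult_right')
  also have "infsum (tm ks' i j z1 z2) D = Li2 ks' i j z1 z2"
    using ks l' by (simp add: Li2_tm D_def ks'_def)
  finally have "infsum (d1 ks i j z1 z2) D = 1 / z1 * Li2 ks' i j z1 z2" .
  note fin = this
  have "((\<lambda>w. Li2 ks i j w z2) has_field_derivative infsum (d1 ks i j z1 z2) D) (at z1)"
    unfolding D_def by (rule deriv_z1[OF z1(1) z2 ks]) (use ds in \<open>simp add: D_def\<close>)
  thus ?thesis unfolding fin ks'_def .
qed

lemma case6:
  assumes z1: "norm z1 < 1" and z2: "norm z2 < 1" "z2 \<noteq> 0" and ks: "i < length ks" and j: "j \<noteq> 0"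
    and k: "ks ! i > 1"
  shows "((\<lambda>w. Li2 ks i j z1 w) has_field_derivative (1 / z2 * Li2 (ks[i := ks ! i - 1]) i j z1 z2)) (at z2)"
proof -
  define D where "D = dec_tuples (length ks)"
  define ks' where "ks' = ks[i := ks ! i - 1]"
  have l': "length ks' = length ks" by (simp add: ks'_def)
  have ksne: "ks \<noteq> []" using ks by auto
  have z2': "norm z2 \<le> 1" using z2 by simp
  have eq: "d2 ks i z1 z2 ns = 1 / z2 * tm ks' i j z1 z2 ns" if ns: "ns \<in> D" for ns
  proof -
    have len: "length ns = length ks" and pos: "\<forall>n\<in>set ns. 0 < n" using ns by (auto simp: D_def dec_tuples_def)
    have n1: "1 \<le> ns ! i" using pos len ks by (simp add: Suc_le_eq)
    have P1: "Pr ks ns = of_nat (ns!i) ^ (ks!i) * Pr (del_at i ks) (del_at i ns)" by (rule Pr_split[OF len ks])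
    have P2: "Pr ks' ns = of_nat (ns!i) ^ (ks!i - 1) * Pr (del_at i ks) (del_at i ns)"
      unfolding ks'_def by (rule Pr_upd[OF len ks])
    have R: "Pr (del_at i ks) (del_at i ns) \<noteq> 0" using Pr_nz[OF pos len] P1 by auto
    have "of_nat (ns!i) * z2 ^ (ns!i - 1) * z1 ^ (ns!0) / (of_nat (ns!i) ^ (ks!i) * Pr (del_at i ks) (del_at i ns))
        = 1 / z2 * (z2 ^ (ns!i) * z1 ^ (ns!0) / (of_nat (ns!i) ^ (ks!i - 1) * Pr (del_at i ks) (del_at i ns)))"
      by (rule alg1[OF n1 _ z2(2) R]) (use k in auto)
    thus ?thesis unfolding d2_def tm_def P1 P2 using j by (simp add: ac_simps)
  qed
  have ts: "tm ks' i j z1 z2 summable_on D" using tm_summable[OF z1(1) z2', of ks' i j] l' by (simp add: D_def)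
  have ds: "d2 ks i z1 z2 summable_on D"
    using summable_on_cmult_right[OF ts, of "1/z2"] summable_on_cong[where f="d2 ks i z1 z2" and g="\<lambda>ns. 1 / z2 * tm ks' i j z1 z2 ns" and A=D] eq by blast
  have "infsum (d2 ks i z1 z2) D = infsum (\<lambda>ns. 1 / z2 * tm ks' i j z1 z2 ns) D"
    by (rule infsum_cong[OF eq])
  also have "\<dots> = 1 / z2 * infsum (tm ks' i j z1 z2) D"
    by (rule infsum_cmult_right')
  also have "infsum (tm ks' i j z1 z2) D = Li2 ks' i j z1 z2"
    using ksne l' by (simp add: Li2_tm D_def ks'_def)
  finally have "infsum (d2 ks i z1 z2) D = 1 / z2 * Li2 ks' i j z1 z2" .
  note fin = this
  have "((\<lambda>w. Li2 ks i j z1 w) has_field_derivative infsum (d2 ks i z1 z2) D) (at z2)"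
    unfolding D_def by (rule deriv_z2[OF z1 z2(1) ksne j]) (use ds in \<open>simp add: D_def\<close>)
  thus ?thesis unfolding fin ks'_def .
qed

lemma tl_dec: "ns \<in> dec_tuples (Suc m) \<Longrightarrow> tl ns \<in> dec_tuples m"
  using del_at_dec(1)[of ns m 0] by (simp add: del_at0)

lemma cons_case:
  fixes q :: complex and Y :: "nat list \<Rightarrow> complex"
  assumes q: "norm q < 1"
    and eq: "\<And>ns. ns \<in> dec_tuples (Suc m) \<Longrightarrow> dd ns = q ^ (ns ! 0 - 1) * Y (tl ns)"
    and Yb: "\<And>t. t \<in> dec_tuples m \<Longrightarrow> norm (Y t) \<le> 1"
  shows "dd summable_on dec_tuples (Suc m)"
    "infsum dd (dec_tuples (Suc m)) = 1 / (1 - q) * (\<Sum>\<^sub>\<infinity>t\<in>dec_tuples m. q ^ hd0 t * Y t)"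
proof -
  let ?D = "dec_tuples (Suc m)"
  let ?f = "\<lambda>ns. q ^ (ns ! 0 - 1) * Y (tl ns)"
  have fs: "?f summable_on ?D"
  proof (rule summ_bound[OF summ_r1[of "norm q"]])
    fix ns assume ns: "ns \<in> ?D"
    have "norm (?f ns) = norm q ^ (ns ! 0 - 1) * norm (Y (tl ns))" by (simp add: norm_mult norm_power)
    also have "\<dots> \<le> norm q ^ (ns ! 0 - 1) * 1"
      by (rule mult_left_mono) (use Yb[OF tl_dec[OF ns]] in auto)
    finally show "norm (?f ns) \<le> norm q ^ (ns ! 0 - 1)" by simp
  qed (use q in auto)
  show "dd summable_on ?D"
    using fs summable_on_cong[where f=dd and g="?f" and A="?D"] eq by blast
  have "infsum dd ?D = infsum ?f ?D" by (rule infsum_cong[OF eq])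
  also have "\<dots> = (\<Sum>\<^sub>\<infinity>t\<in>dec_tuples m. \<Sum>\<^sub>\<infinity>n\<in>Bset 0 t. ?f (ins_at 0 n t))"
    by (rule regroup[OF _ fs]) simp
  also have "\<dots> = (\<Sum>\<^sub>\<infinity>t\<in>dec_tuples m. 1 / (1 - q) * (q ^ hd0 t * Y t))"
  proof (rule infsum_cong)
    fix t assume t: "t \<in> dec_tuples m"
    have "((\<lambda>n. q ^ (n - 1) * Y t) has_sum (q ^ hd0 t / (1 - q) * Y t)) {hd0 t<..}"
      by (rule has_sum_cmult_left[OF geom_gt[OF q]])
    hence "(\<Sum>\<^sub>\<infinity>n\<in>{hd0 t<..}. q ^ (n - 1) * Y t) = q ^ hd0 t / (1 - q) * Y t"
      by (rule infsumI)
    thus "(\<Sum>\<^sub>\<infinity>n\<in>Bset 0 t. ?f (ins_at 0 n t)) = 1 / (1 - q) * (q ^ hd0 t * Y t)"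
      by (simp add: Bset0 ins_at0)
  qed
  also have "\<dots> = 1 / (1 - q) * (\<Sum>\<^sub>\<infinity>t\<in>dec_tuples m. q ^ hd0 t * Y t)"
    by (rule infsum_cmult_right')
  finally show "infsum dd ?D = 1 / (1 - q) * (\<Sum>\<^sub>\<infinity>t\<in>dec_tuples m. q ^ hd0 t * Y t)" .
qed

lemma dec0: "dec_tuples 0 = {[]}" by (auto simp: dec_tuples_def)

lemma LiA:
  "(\<Sum>\<^sub>\<infinity>t\<in>dec_tuples (length kt). (z1 * z2) ^ hd0 t * (c / Pr kt t)) = c * Li2 kt 0 (length kt) z1 z2"
proof (cases "kt = []")
  case True thus ?thesis by (simp add: dec0 hd0_def Li2_def)
next
  case False
  have "(\<Sum>\<^sub>\<infinity>t\<in>dec_tuples (length kt). (z1 * z2) ^ hd0 t * (c / Pr kt t))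
      = (\<Sum>\<^sub>\<infinity>t\<in>dec_tuples (length kt). c * tm kt 0 (length kt) z1 z2 t)"
  proof (rule infsum_cong)
    fix t assume "t \<in> dec_tuples (length kt)"
    hence "t \<noteq> []" using False by (auto simp: dec_tuples_def)
    thus "(z1 * z2) ^ hd0 t * (c / Pr kt t) = c * tm kt 0 (length kt) z1 z2 t"
      using False by (simp add: hd0_def tm_def power_mult_distrib)
  qed
  also have "\<dots> = c * Li2 kt 0 (length kt) z1 z2"
    using False by (simp add: infsum_cmult_right' Li2_tm)
  finally show ?thesis .
qed

lemma LiB:
  assumes "kt = [] \<Longrightarrow> j = 0" "0 < i"
  shows "(\<Sum>\<^sub>\<infinity>t\<in>dec_tuples (length kt). z1 ^ hd0 t * ((if j = 0 then 1 else z2 ^ (t ! (i - 1))) / Pr kt t))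
         = Li2 kt (i - 1) j z1 z2"
proof (cases "kt = []")
  case True thus ?thesis using assms by (simp add: dec0 hd0_def Li2_def)
next
  case False
  have "(\<Sum>\<^sub>\<infinity>t\<in>dec_tuples (length kt). z1 ^ hd0 t * ((if j = 0 then 1 else z2 ^ (t ! (i - 1))) / Pr kt t))
      = (\<Sum>\<^sub>\<infinity>t\<in>dec_tuples (length kt). tm kt (i - 1) j z1 z2 t)"
  proof (rule infsum_cong)
    fix t assume "t \<in> dec_tuples (length kt)"
    hence "t \<noteq> []" using False by (auto simp: dec_tuples_def)
    thus "z1 ^ hd0 t * ((if j = 0 then 1 else z2 ^ (t ! (i - 1))) / Pr kt t) = tm kt (i - 1) j z1 z2 t"
      by (simp add: hd0_def tm_def)
  qed
  also have "\<dots> = Li2 kt (i - 1) j z1 z2"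
    using False by (simp add: Li2_tm)
  finally show ?thesis .
qed

lemma Pr_bound1: "t \<in> dec_tuples (length kt) \<Longrightarrow> norm c \<le> 1 \<Longrightarrow> norm (c / Pr kt t) \<le> 1"
proof -
  assume t: "t \<in> dec_tuples (length kt)" and c: "norm c \<le> 1"
  have "1 \<le> norm (Pr kt t)" using t by (intro Pr_norm) (auto simp: dec_tuples_def)
  hence "norm c / norm (Pr kt t) \<le> 1 / 1" using c by (intro frac_le) auto
  thus ?thesis by (simp add: norm_divide)
qed

lemma alg2:
  fixes z1 z2 P :: complex
  assumes "1 \<le> n" "P \<noteq> 0"
  shows "of_nat n * z1 ^ (n - 1) * z2 ^ n / (of_nat n ^ 1 * P) = (z1 * z2) ^ (n - 1) * (z2 / P)"
    and "z1 ^ n * (of_nat n * z2 ^ (n - 1)) / (of_nat n ^ 1 * P) = (z1 * z2) ^ (n - 1) * (z1 / P)"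
    and "of_nat n * z1 ^ (n - 1) * X / (of_nat n ^ 1 * P) = z1 ^ (n - 1) * (X / P)"
proof -
  obtain a where a: "n = Suc a" using assms(1) by (cases n) auto
  have "of_nat (Suc a) \<noteq> (0::complex)" by (simp del: of_nat_Suc)
  thus "of_nat n * z1 ^ (n - 1) * z2 ^ n / (of_nat n ^ 1 * P) = (z1 * z2) ^ (n - 1) * (z2 / P)"
    "z1 ^ n * (of_nat n * z2 ^ (n - 1)) / (of_nat n ^ 1 * P) = (z1 * z2) ^ (n - 1) * (z1 / P)"
    "of_nat n * z1 ^ (n - 1) * X / (of_nat n ^ 1 * P) = z1 ^ (n - 1) * (X / P)"
    using assms(2) unfolding a by (simp_all add: field_simps power_mult_distrib del: of_nat_Suc)
qed

lemma cons_split: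
  assumes "ns \<in> dec_tuples (Suc m)"
  obtains n t where "ns = n # t" "t \<in> dec_tuples m" "0 < n"
proof -
  have "length ns = Suc m" using assms by (simp add: dec_tuples_def)
  then obtain n t where nt: "ns = n # t" by (cases ns) auto
  moreover have "t \<in> dec_tuples m" using tl_dec[OF assms] nt by simp
  moreover have "0 < n" using assms nt by (simp add: dec_tuples_def)
  ultimately show ?thesis using that by blast
qed

lemma case1:
  assumes z1: "norm z1 < 1" and z2: "norm z2 < 1" and len: "length ks = j" and j: "1 \<le> j" and k: "ks ! 0 = 1"
  shows "((\<lambda>w. Li2 ks 0 j w z2) has_field_derivative (z2 / (1 - z1 * z2) * Li2 (tl ks) 0 (j - 1) z1 z2)) (at z1)"
proof -
  obtain kt where ks: "ks = 1 # kt" using len j k by (cases ks) auto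
  define m where "m = length kt"
  have jm: "j = Suc m" using len ks m_def by simp
  have "norm z1 * norm z2 \<le> norm z1" using z2 by (intro mult_left_le) auto
  hence q: "norm (z1 * z2) < 1" using z1 by (simp add: norm_mult)
  have eq: "d1 ks 0 j z1 z2 ns = (z1 * z2) ^ (ns ! 0 - 1) * (z2 / Pr kt (tl ns))" if ns: "ns \<in> dec_tuples (Suc m)" for ns
  proof -
    obtain n t where nt: "ns = n # t" "t \<in> dec_tuples m" "0 < n" using cons_split[OF ns] by blast
    have P: "Pr kt t \<noteq> 0" using nt(2) by (intro Pr_nz) (auto simp: dec_tuples_def m_def)
    show ?thesis using alg2(1)[of n "Pr kt t" z1 z2] nt P jm
      by (simp add: d1_def ks Pr_Cons)
  qed
  have Yb: "\<And>t. t \<in> dec_tuples m \<Longrightarrow> norm (z2 / Pr kt t) \<le> 1"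
    using z2 by (intro Pr_bound1) (auto simp: m_def)
  note cc = cons_case[OF q eq Yb]
  have D: "dec_tuples (length ks) = dec_tuples (Suc m)" using len jm by simp
  have "((\<lambda>w. Li2 ks 0 j w z2) has_field_derivative infsum (d1 ks 0 j z1 z2) (dec_tuples (length ks))) (at z1)"
    by (rule deriv_z1) (use z1 z2 ks cc(1) D in auto)
  moreover have "infsum (d1 ks 0 j z1 z2) (dec_tuples (length ks)) = z2 / (1 - z1 * z2) * Li2 (tl ks) 0 (j - 1) z1 z2"
    using cc(2) LiA[of z1 z2 z2 kt] D by (simp add: ks m_def jm)
  ultimately show ?thesis by simp
qed


lemma case4:
  assumes z1: "norm z1 < 1" and z2: "norm z2 < 1" and len: "length ks = j" and j: "1 \<le> j" and k: "ks ! 0 = 1"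
  shows "((\<lambda>w. Li2 ks 0 j z1 w) has_field_derivative (z1 / (1 - z1 * z2) * Li2 (tl ks) 0 (j - 1) z1 z2)) (at z2)"
proof -
  obtain kt where ks: "ks = 1 # kt" using len j k by (cases ks) auto
  define m where "m = length kt"
  have jm: "j = Suc m" using len ks m_def by simp
  have "norm z1 * norm z2 \<le> norm z1" using z2 by (intro mult_left_le) auto
  hence q: "norm (z1 * z2) < 1" using z1 by (simp add: norm_mult)
  have eq: "d2 ks 0 z1 z2 ns = (z1 * z2) ^ (ns ! 0 - 1) * (z1 / Pr kt (tl ns))" if ns: "ns \<in> dec_tuples (Suc m)" for ns
  proof -
    obtain n t where nt: "ns = n # t" "t \<in> dec_tuples m" "0 < n" using cons_split[OF ns] by blast
    have P: "Pr kt t \<noteq> 0" using nt(2) by (intro Pr_nz) (auto simp: dec_tuples_def m_def)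
    show ?thesis using alg2(2)[of n "Pr kt t" z1 z2] nt P jm
      by (simp add: d2_def ks Pr_Cons)
  qed
  have Yb: "\<And>t. t \<in> dec_tuples m \<Longrightarrow> norm (z1 / Pr kt t) \<le> 1"
    using z1 by (intro Pr_bound1) (auto simp: m_def)
  note cc = cons_case[OF q eq Yb]
  have D: "dec_tuples (length ks) = dec_tuples (Suc m)" using len jm by simp
  have "((\<lambda>w. Li2 ks 0 j z1 w) has_field_derivative infsum (d2 ks 0 z1 z2) (dec_tuples (length ks))) (at z2)"
    by (rule deriv_z2) (use z1 z2 ks cc(1) D jm in auto)
  moreover have "infsum (d2 ks 0 z1 z2) (dec_tuples (length ks)) = z1 / (1 - z1 * z2) * Li2 (tl ks) 0 (j - 1) z1 z2"
    using cc(2) LiA[of z1 z2 z1 kt] D by (simp add: ks m_def jm)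
  ultimately show ?thesis by simp
qed

lemma case2:
  assumes z1: "norm z1 < 1" and z2: "norm z2 < 1" and len: "length ks = i + j" and i: "0 < i" and k: "ks ! 0 = 1"
  shows "((\<lambda>w. Li2 ks i j w z2) has_field_derivative (1 / (1 - z1) * Li2 (tl ks) (i - 1) j z1 z2)) (at z1)"
proof -
  obtain kt where ks: "ks = 1 # kt" using len i k by (cases ks) auto
  define m where "m = length kt"
  have jm: "i + j = Suc m" using len ks m_def by simp
  define X where "X t = (if j = 0 then 1 else z2 ^ (t ! (i - 1)))" for t
  have eq: "d1 ks i j z1 z2 ns = z1 ^ (ns ! 0 - 1) * (X (tl ns) / Pr kt (tl ns))" if ns: "ns \<in> dec_tuples (Suc m)" for ns
  proof -
    obtain n t where nt: "ns = n # t" "t \<in> dec_tuples m" "0 < n" using cons_split[OF ns] by blast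
    have P: "Pr kt t \<noteq> 0" using nt(2) by (intro Pr_nz) (auto simp: dec_tuples_def m_def)
    have xi: "(n # t) ! i = t ! (i - 1)" using i by (simp add: nth_Cons')
    show ?thesis using alg2(3)[of n "Pr kt t" z1 "X t"] nt P xi
      by (simp add: d1_def ks Pr_Cons X_def)
  qed
  have Yb: "\<And>t. t \<in> dec_tuples m \<Longrightarrow> norm (X t / Pr kt t) \<le> 1"
    using z2 by (intro Pr_bound1) (auto simp: m_def X_def norm_power power_le_one)
  note cc = cons_case[OF z1 eq Yb]
  have D: "dec_tuples (length ks) = dec_tuples (Suc m)" using len jm by simp
  have "((\<lambda>w. Li2 ks i j w z2) has_field_derivative infsum (d1 ks i j z1 z2) (dec_tuples (length ks))) (at z1)"
    by (rule deriv_z1) (use z1 z2 ks cc(1) D in auto)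
  moreover have "infsum (d1 ks i j z1 z2) (dec_tuples (length ks)) = 1 / (1 - z1) * Li2 (tl ks) (i - 1) j z1 z2"
  proof -
    have "kt = [] \<Longrightarrow> j = 0" using jm i m_def by simp
    hence "(\<Sum>\<^sub>\<infinity>t\<in>dec_tuples m. z1 ^ hd0 t * (X t / Pr kt t)) = Li2 kt (i - 1) j z1 z2"
      using LiB[of kt j i z1 z2] i by (simp add: m_def X_def)
    thus ?thesis using cc(2) D by (simp add: ks)
  qed
  ultimately show ?thesis by simp
qed

lemma alg3:
  fixes z1 z2 P :: complex
  assumes "1 \<le> n"
  shows "z1 ^ a * (of_nat n * z2 ^ (n - 1)) / (of_nat n ^ 1 * P) = z2 ^ (n - 1) * (z1 ^ a / P)"
proof -
  obtain b where b: "n = Suc b" using assms(1) by (cases n) auto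
  have "of_nat (Suc b) \<noteq> (0::complex)" by (simp del: of_nat_Suc)
  thus ?thesis unfolding b by (cases "P = 0") (simp_all add: field_simps del: of_nat_Suc)
qed

lemma alg4:
  fixes a b z :: complex assumes "z \<noteq> 0" "z \<noteq> 1"
  shows "1 / (1 - z) * (a - 1 / z * b) = 1 / (1 - z) * a - 1 / (1 - z) * b - 1 / z * b"
proof -
  have nz: "1 - z \<noteq> 0" using assms by simp
  have e: "1 / (1 - z) * (1 / z) = 1 / (1 - z) + 1 / z"
    using nz assms by (simp add: field_simps)
  have "1 / (1 - z) * (a - 1 / z * b) = 1 / (1 - z) * a - (1 / (1 - z) * (1 / z)) * b"
    by (simp only: right_diff_distrib mult.assoc)
  also have "\<dots> = 1 / (1 - z) * a - (1 / (1 - z) + 1 / z) * b" by (simp only: e)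
  also have "\<dots> = 1 / (1 - z) * a - 1 / (1 - z) * b - 1 / z * b" by (simp only: distrib_right diff_diff_eq)
  finally show ?thesis .
qed

lemma infsum_diff':
  fixes A B :: "'a \<Rightarrow> complex"
  assumes "A summable_on S" "B summable_on S"
  shows "(\<Sum>\<^sub>\<infinity>t\<in>S. A t - B t) = infsum A S - infsum B S"
proof -
  have "(\<Sum>\<^sub>\<infinity>t\<in>S. A t + (- B t)) = infsum A S + (\<Sum>\<^sub>\<infinity>t\<in>S. - B t)"
    by (rule infsum_add) (use assms summable_on_uminus in auto)
  thus ?thesis by (simp add: infsum_uminus)
qed

lemma case5:
  assumes z1: "norm z1 < 1" and z2: "norm z2 < 1" "z2 \<noteq> 0" and len: "length ks = i + j"
    and i: "0 < i" and j: "1 \<le> j" and k: "ks ! i = 1"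
  shows "((\<lambda>w. Li2 ks i j z1 w) has_field_derivative
            (1 / (1 - z2) * Li2 (take i ks @ drop (i + 1) ks) i (j - 1) z1 z2
             - 1 / (1 - z2) * Li2 (take i ks @ drop (i + 1) ks) (i - 1) j z1 z2
             - 1 / z2 * Li2 (take i ks @ drop (i + 1) ks) (i - 1) j z1 z2)) (at z2)"
proof -
  define m where "m = i + j - 1"
  have lm: "length ks = Suc m" using len j by (simp add: m_def)
  have im: "i \<le> m" and im': "i < length ks" using j lm by (auto simp: m_def)
  define kp where "kp = del_at i ks"
  have lkp: "length kp = m" using lm im by (simp add: kp_def del_at_def)
  have kpne: "kp \<noteq> []" using lkp i im by auto
  have kp_eq: "take i ks @ drop (i + 1) ks = kp" by (simp add: kp_def del_at_def)
  define Z where "Z t = z1 ^ (t ! 0) / Pr kp t" for t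
  let ?D = "dec_tuples (Suc m)"
  let ?f = "\<lambda>ns. z2 ^ (ns ! i - 1) * Z (del_at i ns)"
  have z2': "norm z2 \<le> 1" "z2 \<noteq> 1" using z2 by auto
  have d0: "del_at i ns ! 0 = ns ! 0" if "length ns = Suc m" for ns
    using that i im by (simp add: del_at_def nth_append)
  have eq: "d2 ks i z1 z2 ns = ?f ns" if ns: "ns \<in> ?D" for ns
  proof -
    have lns: "length ns = length ks" and pos: "\<forall>n\<in>set ns. 0 < n" using ns lm by (auto simp: dec_tuples_def)
    have n1: "1 \<le> ns ! i" using pos lns im' by (simp add: Suc_le_eq)
    have P1: "Pr ks ns = of_nat (ns!i) ^ 1 * Pr kp (del_at i ns)" using Pr_split[OF lns im'] k by (simp add: kp_def)
    show ?thesis unfolding d2_def P1 Z_def d0[OF lns[unfolded lm]]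
      by (rule alg3[OF n1])
  qed
  have fs: "?f summable_on ?D"
  proof (rule summ_bound[OF summ_r0[of "norm z1"]])
    fix ns assume ns: "ns \<in> ?D"
    have dd: "del_at i ns \<in> dec_tuples m" by (rule del_at_dec(1)[OF ns im])
    have lns: "length ns = Suc m" using ns by (simp add: dec_tuples_def)
    have "norm (Z (del_at i ns)) \<le> norm z1 ^ (ns ! 0)"
      using tm_bound[of "del_at i ns" kp 1 i 0 z1] dd lkp d0[OF lns] by (simp add: tm_def Z_def)
    moreover have "norm (z2 ^ (ns ! i - 1)) \<le> 1" using z2' by (simp add: norm_power power_le_one)
    ultimately show "norm (?f ns) \<le> norm z1 ^ (ns ! 0)"
      by (simp add: norm_mult) (metis mult_le_one mult_left_le norm_ge_zero order_trans mult.commute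
          mult_mono zero_le_power)
  qed (use z1 in auto)
  have ds: "d2 ks i z1 z2 summable_on ?D"
    using fs summable_on_cong[where f="d2 ks i z1 z2" and g="?f" and A="?D"] eq by blast
  define lo where "lo t = (if i < length t then t ! i else 0)" for t :: "nat list"
  define A where "A t = Z t * z2 ^ lo t" for t
  define B where "B t = Z t * z2 ^ (t ! (i - 1) - 1)" for t
  have inner: "(\<Sum>\<^sub>\<infinity>n\<in>Bset i t. ?f (ins_at i n t)) = 1 / (1 - z2) * (A t - B t)"
    if t: "t \<in> dec_tuples m" for t
  proof -
    have lt: "length t = m" using t by (simp add: dec_tuples_def)
    have B: "Bset i t = {lo t<..<t ! (i - 1)}" using i by (auto simp: Bset_def lo_def)
    have lohi: "lo t < t ! (i - 1)"
    proof (cases "i < length t")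
      case True
      thus ?thesis using dec_sorted_nth[of t "i - 1" i] t i by (simp add: lo_def dec_tuples_def)
    next
      case False thus ?thesis using dec_nth_pos[OF t, of "i - 1"] i im lt by (simp add: lo_def)
    qed
    have fi: "\<And>n. ?f (ins_at i n t) = z2 ^ (n - 1) * Z t"
      using im lt by (simp add: ins_at_def del_at_def nth_append)
    have "(\<Sum>\<^sub>\<infinity>n\<in>Bset i t. ?f (ins_at i n t)) = (\<Sum>n\<in>{lo t<..<t ! (i - 1)}. z2 ^ (n - 1) * Z t)"
      unfolding B fi by simp
    also have "\<dots> = (\<Sum>n\<in>{lo t<..<t ! (i - 1)}. z2 ^ (n - 1)) * Z t" by (simp add: sum_distrib_right)
    also have "\<dots> = (z2 ^ lo t - z2 ^ (t ! (i - 1) - 1)) / (1 - z2) * Z t"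
      by (subst geom_fin[OF z2'(2) lohi]) simp
    also have "\<dots> = 1 / (1 - z2) * (A t - B t)"
      using z2'(2) by (simp add: A_def B_def field_simps)
    finally show ?thesis .
  qed
  have A_tm: "A t = tm kp i (j - 1) z1 z2 t" if t: "t \<in> dec_tuples m" for t
  proof -
    have lt: "length t = m" using t by (simp add: dec_tuples_def)
    show ?thesis using lt j by (auto simp: A_def Z_def tm_def lo_def m_def)
  qed
  have B_tm: "B t = 1 / z2 * tm kp (i - 1) j z1 z2 t" if t: "t \<in> dec_tuples m" for t
  proof -
    have "0 < t ! (i - 1)" using dec_nth_pos[OF t, of "i - 1"] i im by simp
    hence "z2 ^ (t ! (i - 1)) = z2 * z2 ^ (t ! (i - 1) - 1)" by (cases "t ! (i - 1)") auto
    thus ?thesis using j z2(2) by (simp add: B_def Z_def tm_def)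
  qed
  have sA: "A summable_on dec_tuples m"
    using tm_summable[OF z1 z2'(1), of kp i "j - 1"] lkp A_tm
      summable_on_cong[where f=A and g="tm kp i (j - 1) z1 z2" and A="dec_tuples m"] by simp
  have sB: "B summable_on dec_tuples m"
    using summable_on_cmult_right[OF tm_summable[OF z1 z2'(1), of kp "i - 1" j], of "1/z2"] lkp B_tm
      summable_on_cong[where f=B and g="\<lambda>t. 1 / z2 * tm kp (i - 1) j z1 z2 t" and A="dec_tuples m"] by simp
  have "infsum (d2 ks i z1 z2) ?D = infsum ?f ?D" by (rule infsum_cong[OF eq])
  also have "\<dots> = (\<Sum>\<^sub>\<infinity>t\<in>dec_tuples m. \<Sum>\<^sub>\<infinity>n\<in>Bset i t. ?f (ins_at i n t))"
    by (rule regroup[OF im fs])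
  also have "\<dots> = (\<Sum>\<^sub>\<infinity>t\<in>dec_tuples m. 1 / (1 - z2) * (A t - B t))"
    by (rule infsum_cong) (rule inner)
  also have "\<dots> = 1 / (1 - z2) * (infsum A (dec_tuples m) - infsum B (dec_tuples m))"
    by (subst infsum_cmult_right', subst infsum_diff'[OF sA sB]) (rule refl)
  also have "infsum A (dec_tuples m) = Li2 kp i (j - 1) z1 z2"
    using infsum_cong[of "dec_tuples m" A "tm kp i (j - 1) z1 z2"] A_tm kpne lkp by (simp add: Li2_tm)
  also have "infsum B (dec_tuples m) = 1 / z2 * Li2 kp (i - 1) j z1 z2"
  proof -
    have "infsum B (dec_tuples m) = (\<Sum>\<^sub>\<infinity>t\<in>dec_tuples m. 1 / z2 * tm kp (i - 1) j z1 z2 t)"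
      by (rule infsum_cong[OF B_tm])
    also have "\<dots> = 1 / z2 * infsum (tm kp (i - 1) j z1 z2) (dec_tuples m)"
      by (rule infsum_cmult_right')
    finally show ?thesis using kpne lkp by (simp add: Li2_tm)
  qed
  also have "1 / (1 - z2) * (Li2 kp i (j - 1) z1 z2 - 1 / z2 * Li2 kp (i - 1) j z1 z2)
      = 1 / (1 - z2) * Li2 kp i (j - 1) z1 z2 - 1 / (1 - z2) * Li2 kp (i - 1) j z1 z2
        - 1 / z2 * Li2 kp (i - 1) j z1 z2"
    by (rule alg4[OF z2(2) z2'(2)])
  finally have fin: "infsum (d2 ks i z1 z2) ?D = \<dots>" .
  have "((\<lambda>w. Li2 ks i j z1 w) has_field_derivative infsum (d2 ks i z1 z2) (dec_tuples (length ks))) (at z2)"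
    by (rule deriv_z2) (use z1 z2 lm ds j in auto)
  thus ?thesis unfolding kp_eq using fin lm by simp
qed

theorem proposition7p1:
  fixes ks :: "nat list" and i j :: nat and z1 z2 :: complex
  assumes "norm z1 < 1" and "norm z2 < 1"
    and "length ks = i + j" and "\<forall>k\<in>set ks. 1 \<le> k" and "1 \<le> i + j"
  shows
   "(i = 0 \<and> ks ! 0 = 1 \<longrightarrow>
       ((\<lambda>w. Li2 ks i j w z2) has_field_derivative
          (z2 / (1 - z1 * z2) * Li2 (tl ks) 0 (j - 1) z1 z2)) (at z1)) \<and>
    (i > 0 \<and> ks ! 0 = 1 \<longrightarrow>
       ((\<lambda>w. Li2 ks i j w z2) has_field_derivative
          (1 / (1 - z1) * Li2 (tl ks) (i - 1) j z1 z2)) (at z1)) \<and>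
    (ks ! 0 > 1 \<and> z1 \<noteq> 0 \<longrightarrow>
       ((\<lambda>w. Li2 ks i j w z2) has_field_derivative
          (1 / z1 * Li2 (ks[0 := ks ! 0 - 1]) i j z1 z2)) (at z1)) \<and>
    (j \<ge> 1 \<longrightarrow>
      (i = 0 \<and> ks ! 0 = 1 \<longrightarrow>
         ((\<lambda>w. Li2 ks i j z1 w) has_field_derivative
            (z1 / (1 - z1 * z2) * Li2 (tl ks) 0 (j - 1) z1 z2)) (at z2)) \<and>
      (i > 0 \<and> ks ! i = 1 \<and> z2 \<noteq> 0 \<longrightarrow>
         ((\<lambda>w. Li2 ks i j z1 w) has_field_derivative
            (1 / (1 - z2) * Li2 (take i ks @ drop (i + 1) ks) i (j - 1) z1 z2
             - 1 / (1 - z2) * Li2 (take i ks @ drop (i + 1) ks) (i - 1) j z1 z2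
             - 1 / z2 * Li2 (take i ks @ drop (i + 1) ks) (i - 1) j z1 z2)) (at z2)) \<and>
      (ks ! i > 1 \<and> z2 \<noteq> 0 \<longrightarrow>
         ((\<lambda>w. Li2 ks i j z1 w) has_field_derivative
            (1 / z2 * Li2 (ks[i := ks ! i - 1]) i j z1 z2)) (at z2)))"
proof -
  have ksne: "ks \<noteq> []" using assms(3,5) by auto
  have z2': "norm z2 \<le> 1" using assms(2) by simp
  show ?thesis
  proof (intro conjI impI)
    assume h: "i = 0 \<and> ks ! 0 = 1"
    show "((\<lambda>w. Li2 ks i j w z2) has_field_derivative (z2 / (1 - z1 * z2) * Li2 (tl ks) 0 (j - 1) z1 z2)) (at z1)"
      using case1[OF assms(1,2), of ks j] h assms(3,5) by simp
  next
    assume h: "0 < i \<and> ks ! 0 = 1"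
    show "((\<lambda>w. Li2 ks i j w z2) has_field_derivative (1 / (1 - z1) * Li2 (tl ks) (i - 1) j z1 z2)) (at z1)"
      using case2[OF assms(1,2,3)] h by simp
  next
    assume h: "1 < ks ! 0 \<and> z1 \<noteq> 0"
    show "((\<lambda>w. Li2 ks i j w z2) has_field_derivative (1 / z1 * Li2 (ks[0 := ks ! 0 - 1]) i j z1 z2)) (at z1)"
      using case3[OF assms(1) _ z2' ksne] h by simp
  next
    assume j: "1 \<le> j" and h: "i = 0 \<and> ks ! 0 = 1"
    show "((\<lambda>w. Li2 ks i j z1 w) has_field_derivative (z1 / (1 - z1 * z2) * Li2 (tl ks) 0 (j - 1) z1 z2)) (at z2)"
      using case4[OF assms(1,2), of ks j] h assms(3) j by simp
  next
    assume j: "1 \<le> j" and h: "0 < i \<and> ks ! i = 1 \<and> z2 \<noteq> 0"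
    show "((\<lambda>w. Li2 ks i j z1 w) has_field_derivative
            (1 / (1 - z2) * Li2 (take i ks @ drop (i + 1) ks) i (j - 1) z1 z2
             - 1 / (1 - z2) * Li2 (take i ks @ drop (i + 1) ks) (i - 1) j z1 z2
             - 1 / z2 * Li2 (take i ks @ drop (i + 1) ks) (i - 1) j z1 z2)) (at z2)"
      using case5[OF assms(1,2) _ assms(3) _ j] h by simp
  next
    assume j: "1 \<le> j" and h: "1 < ks ! i \<and> z2 \<noteq> 0"
    show "((\<lambda>w. Li2 ks i j z1 w) has_field_derivative (1 / z2 * Li2 (ks[i := ks ! i - 1]) i j z1 z2)) (at z2)"
      using case6[OF assms(1,2) _ _ _] h j assms(3) by simp
  qed
qed

end
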